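(* Let $\mathcal{M}_1,\mathcal{M}_2$ be matroids on a finite ground set $E$. For any parameters $f,p\in(0,1)$, any arrival order and any values of the auxiliary bits, the sets $S,N_1,N_2$ produced by Marking-Greedy satisfy that $S\cup N_1\cup N_2$ is independent in both $\mathcal{M}_1$ and $\mathcal{M}_2$.
   Context: For $i\in\{1,2\}$, $\bar\imath$ denotes the other index, and $\mathrm{span}_i(T)=\{e\in E:\mathrm{rank}_{\mathcal{M}_i}(T\cup\{e\})=\mathrm{rank}_{\mathcal{M}_i}(T)\}$. Marking-Greedy with parameters $f,p$: elements of $E$ ($m=|E|$) arrive in an order $\pi$; auxiliary bits $\Psi(e)\in\{0,1\}$ are given (in the randomized algorithm, i.i.d. with $\Pr[\Psi(e)=1]=1-p$). Phase (a): start with $S=T=\emptyset$; for each of the first $fm$ arriving elements $e$, if $T\cup\{e\}$ is independent in both matroids, add $e$ to $T$, and if moreover $\Psi(e)=1$ add $e$ to $S$. Phase (b): let $T_f$ be the final $T$, set $N_1=N_2=\emptyset$; for each remaining arriving element $e$ and each $i\in\{1,2\}$: if $e\in\mathrm{span}_i(T_f)$, $e\notin\mathrm{span}_{\bar\imath}(T_f)$, $S\cup N_i\cup\{e\}$ is independent in $\mathcal{M}_i$ and $T_f\cup N_i\cup\{e\}$ is independent in $\mathcal{M}_{\bar\imath}$, then add $e$ to $N_i$. Output $S\cup N_1\cup N_2$. *)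

theory Defs
  imports Complex_Main
begin

definition matroid :: "'a set \<Rightarrow> ('a set \<Rightarrow> bool) \<Rightarrow> bool" where
  "matroid E indep \<longleftrightarrow> finite E \<and> indep {} \<and>
     (\<forall>X. indep X \<longrightarrow> X \<subseteq> E) \<and>
     (\<forall>X Y. indep X \<and> Y \<subseteq> X \<longrightarrow> indep Y) \<and>
     (\<forall>X Y. indep X \<and> indep Y \<and> card X < card Y \<longrightarrow> (\<exists>e\<in>Y - X. indep (insert e X)))"

definition mrank :: "('a set \<Rightarrow> bool) \<Rightarrow> 'a set \<Rightarrow> nat" where
  "mrank indep T = Max {card X | X. X \<subseteq> T \<and> indep X}"

definition mspan :: "'a set \<Rightarrow> ('a set \<Rightarrow> bool) \<Rightarrow> 'a set \<Rightarrow> 'a set" where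
  "mspan E indep T = {e \<in> E. mrank indep (T \<union> {e}) = mrank indep T}"

text \<open>Phase (a) step; state is (S, T). Psi e = True means the auxiliary bit is 1.\<close>
definition phase_a_step :: "('a set \<Rightarrow> bool) \<Rightarrow> ('a set \<Rightarrow> bool) \<Rightarrow> ('a \<Rightarrow> bool)
    \<Rightarrow> 'a \<Rightarrow> 'a set \<times> 'a set \<Rightarrow> 'a set \<times> 'a set" where
  "phase_a_step I1 I2 Psi e ST = (case ST of (S, T) \<Rightarrow>
     if I1 (T \<union> {e}) \<and> I2 (T \<union> {e})
     then (if Psi e then S \<union> {e} else S, T \<union> {e}) else (S, T))"

text \<open>Phase (b) update of N_i, with Ii the i-th matroid and Ij the other one.\<close>
definition add_N :: "'a set \<Rightarrow> ('a set \<Rightarrow> bool) \<Rightarrow> ('a set \<Rightarrow> bool) \<Rightarrow> 'a set \<Rightarrow> 'a set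
    \<Rightarrow> 'a \<Rightarrow> 'a set \<Rightarrow> 'a set" where
  "add_N E Ii Ij S Tf e N =
     (if e \<in> mspan E Ii Tf \<and> e \<notin> mspan E Ij Tf \<and> Ii (S \<union> N \<union> {e}) \<and> Ij (Tf \<union> N \<union> {e})
      then N \<union> {e} else N)"

definition phase_b_step :: "'a set \<Rightarrow> ('a set \<Rightarrow> bool) \<Rightarrow> ('a set \<Rightarrow> bool) \<Rightarrow> 'a set \<Rightarrow> 'a set
    \<Rightarrow> 'a \<Rightarrow> 'a set \<times> 'a set \<Rightarrow> 'a set \<times> 'a set" where
  "phase_b_step E I1 I2 S Tf e NN = (case NN of (N1, N2) \<Rightarrow>
     (let N1' = add_N E I1 I2 S Tf e N1 in (N1', add_N E I2 I1 S Tf e N2)))"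

text \<open>Marking-Greedy with parameter f (p only governs the distribution of Psi).
  The arrival order is the list ord; the first floor(f*m) elements form phase (a).
  Returns (S, N1, N2).\<close>
definition marking_greedy :: "'a set \<Rightarrow> ('a set \<Rightarrow> bool) \<Rightarrow> ('a set \<Rightarrow> bool) \<Rightarrow> real
    \<Rightarrow> 'a list \<Rightarrow> ('a \<Rightarrow> bool) \<Rightarrow> 'a set \<times> 'a set \<times> 'a set" where
  "marking_greedy E I1 I2 f ord Psi =
     (let k = nat \<lfloor>f * real (length ord)\<rfloor>;
          (S, Tf) = fold (phase_a_step I1 I2 Psi) (take k ord) ({}, {});
          (N1, N2) = fold (phase_b_step E I1 I2 S Tf) (drop k ord) ({}, {})
      in (S, N1, N2))"

end

theory Submission
  imports Defs
begin

lemma m_fin: "matroid E I \<Longrightarrow> I X \<Longrightarrow> finite X"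
  unfolding matroid_def by (meson finite_subset)

lemma m_sub: "matroid E I \<Longrightarrow> I X \<Longrightarrow> Y \<subseteq> X \<Longrightarrow> I Y"
  unfolding matroid_def by blast

lemma m_E: "matroid E I \<Longrightarrow> I X \<Longrightarrow> X \<subseteq> E"
  unfolding matroid_def by blast

lemma m_aug: "matroid E I \<Longrightarrow> I X \<Longrightarrow> I Y \<Longrightarrow> card X < card Y \<Longrightarrow> \<exists>e\<in>Y - X. I (insert e X)"
  unfolding matroid_def by blast

lemma rank_set: assumes "matroid E I"
  shows "finite {card X |X. X \<subseteq> T \<and> I X}" "{card X |X. X \<subseteq> T \<and> I X} \<noteq> {}"
proof -
  have "{card X |X. X \<subseteq> T \<and> I X} \<subseteq> {..card E}"
    using assms unfolding matroid_def by (auto intro: card_mono)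
  then show "finite {card X |X. X \<subseteq> T \<and> I X}" using finite_subset by blast
  have "I {}" using assms unfolding matroid_def by blast
  then show "{card X |X. X \<subseteq> T \<and> I X} \<noteq> {}" by blast
qed

lemma rank_ge: "matroid E I \<Longrightarrow> X \<subseteq> T \<Longrightarrow> I X \<Longrightarrow> card X \<le> mrank I T"
  unfolding mrank_def using rank_set[of E I T] by (intro Max_ge) auto

lemma rank_ex: "matroid E I \<Longrightarrow> \<exists>X. X \<subseteq> T \<and> I X \<and> card X = mrank I T"
proof -
  assume a: "matroid E I"
  have "mrank I T \<in> {card X |X. X \<subseteq> T \<and> I X}"
    unfolding mrank_def using rank_set[OF a, of T] by (intro Max_in) auto
  then have "\<exists>X. mrank I T = card X \<and> X \<subseteq> T \<and> I X" by (simp only: mem_Collect_eq)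
  then show ?thesis by metis
qed

lemma rank_mono: assumes "matroid E I" "A \<subseteq> B" shows "mrank I A \<le> mrank I B"
proof -
  obtain X where X: "X \<subseteq> A" "I X" "card X = mrank I A" using rank_ex[OF assms(1)] by blast
  have "X \<subseteq> B" using X(1) assms(2) by (rule order_trans)
  from rank_ge[OF assms(1) this X(2)] X(3) show ?thesis by simp
qed

lemma rank_indep: assumes "matroid E I" "I X" shows "mrank I X = card X"
proof -
  obtain Y where Y: "Y \<subseteq> X" "I Y" "card Y = mrank I X" using rank_ex[OF assms(1)] by blast
  have "card Y \<le> card X" using Y(1) m_fin[OF assms] by (rule card_mono[rotated])
  moreover have "card X \<le> mrank I X" using rank_ge[OF assms(1) order_refl assms(2)] .
  ultimately show ?thesis using Y(3) by simp
qed

lemma indep_rank: assumes "matroid E I" "finite X" "card X \<le> mrank I X" shows "I X"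
proof -
  obtain Y where "Y \<subseteq> X" "I Y" "card Y = mrank I X" using rank_ex[OF assms(1)] by blast
  then have "Y = X" using assms by (metis card_seteq)
  then show ?thesis using \<open>I Y\<close> by simp
qed

lemma extend: assumes "matroid E I"
  shows "I J \<Longrightarrow> J \<subseteq> Z \<Longrightarrow> \<exists>K. J \<subseteq> K \<and> K \<subseteq> Z \<and> I K \<and> card K = mrank I Z"
proof (induction "mrank I Z - card J" arbitrary: J rule: less_induct)
  case less
  show ?case
  proof (cases "card J < mrank I Z")
    case False
    then show ?thesis using less rank_ge[OF assms, of J Z] by (intro exI[of _ J]) auto
  next
    case True
    obtain X where X: "X \<subseteq> Z" "I X" "card X = mrank I Z" using rank_ex[OF assms] by blast
    then obtain e where e: "e \<in> X - J" "I (insert e J)" using m_aug[OF assms less(2) X(2)] True by auto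
    have fJ: "finite J" using m_fin[OF assms less(2)] .
    have "card (insert e J) = Suc (card J)" using e fJ by simp
    then have "mrank I Z - card (insert e J) < mrank I Z - card J" using True by simp
    have "insert e J \<subseteq> Z" using e X less(3) by blast
    from less(1)[OF \<open>mrank I Z - card (insert e J) < mrank I Z - card J\<close> e(2) this]
    obtain K where "insert e J \<subseteq> K" "K \<subseteq> Z" "I K" "card K = mrank I Z" by blast
    then show ?thesis by blast
  qed
qed

lemma submod: assumes "matroid E I"
  shows "mrank I (X \<union> Y) + mrank I (X \<inter> Y) \<le> mrank I X + mrank I Y"
proof -
  obtain J where J: "J \<subseteq> X \<inter> Y" "I J" "card J = mrank I (X \<inter> Y)" using rank_ex[OF assms] by blast
  obtain K where K: "J \<subseteq> K" "K \<subseteq> X \<union> Y" "I K" "card K = mrank I (X \<union> Y)"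
    using extend[OF assms J(2), of "X \<union> Y"] J(1) by blast
  have fK: "finite K" using m_fin[OF assms K(3)] .
  have "card (K \<inter> X) \<le> mrank I X" using rank_ge[OF assms, of "K \<inter> X" X] m_sub[OF assms K(3)] by auto
  moreover have "card (K \<inter> Y) \<le> mrank I Y" using rank_ge[OF assms, of "K \<inter> Y" Y] m_sub[OF assms K(3)] by auto
  moreover have "card (K \<inter> X) + card (K \<inter> Y) = card K + card (K \<inter> X \<inter> Y)"
  proof -
    have "card ((K \<inter> X) \<union> (K \<inter> Y)) + card ((K \<inter> X) \<inter> (K \<inter> Y)) = card (K \<inter> X) + card (K \<inter> Y)"
      using fK by (intro card_Un_Int[symmetric]) auto
    moreover have "(K \<inter> X) \<union> (K \<inter> Y) = K" using K(2) by auto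
    moreover have "(K \<inter> X) \<inter> (K \<inter> Y) = K \<inter> X \<inter> Y" by auto
    ultimately show ?thesis by simp
  qed
  moreover have "card J \<le> card (K \<inter> X \<inter> Y)" using J(1) K(1) fK by (intro card_mono) auto
  ultimately have "card K + card J \<le> mrank I X + mrank I Y" by linarith
  then show ?thesis using J(3) K(4) by simp
qed

lemma span_union: assumes "matroid E I" "A \<subseteq> mspan E I T"
  shows "mrank I (T \<union> A) = mrank I T"
proof -
  have "mspan E I T \<subseteq> E" unfolding mspan_def by (rule Collect_restrict)
  moreover have "finite E" using assms(1) unfolding matroid_def by (rule conjunct1)
  ultimately have fA: "finite A" using assms(2) by (meson finite_subset)
  from fA assms(2) show ?thesis
  proof (induction A rule: finite_induct)
    case empty then show ?case by simp
  next
    case (insert e A)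
    have IH: "mrank I (T \<union> A) = mrank I T" using insert by auto
    have e: "mrank I (T \<union> {e}) = mrank I T" using insert(4) unfolding mspan_def by auto
    have s: "mrank I ((T \<union> A) \<union> (T \<union> {e})) + mrank I ((T \<union> A) \<inter> (T \<union> {e})) \<le> mrank I (T \<union> A) + mrank I (T \<union> {e})"
      by (rule submod[OF assms(1)])
    have "mrank I T \<le> mrank I ((T \<union> A) \<inter> (T \<union> {e}))" by (rule rank_mono[OF assms(1)]) auto
    moreover have "mrank I T \<le> mrank I (T \<union> insert e A)" by (rule rank_mono[OF assms(1)]) auto
    moreover have eq: "(T \<union> A) \<union> (T \<union> {e}) = T \<union> insert e A" by auto
    ultimately show ?case using s[unfolded eq] IH e by linarith
  qed
qed

lemma indep_in_span: assumes "matroid E I" "I T" shows "T \<subseteq> mspan E I T"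
  using m_E[OF assms] unfolding mspan_def by (auto simp: insert_absorb)

lemma key: assumes m: "matroid E I" and A: "I A" "A \<subseteq> mspan E I T" and T: "I T"
  and TN: "I (T \<union> N)" and N: "N \<inter> mspan E I T = {}"
  shows "I (A \<union> N)"
proof -
  have s: "mrank I ((A \<union> N) \<union> (T \<union> A)) + mrank I ((A \<union> N) \<inter> (T \<union> A)) \<le> mrank I (A \<union> N) + mrank I (T \<union> A)"
    by (rule submod[OF m])
  have "mrank I (T \<union> A) = card T" using span_union[OF m A(2)] rank_indep[OF m T] by simp
  moreover have "card (T \<union> N) \<le> mrank I ((A \<union> N) \<union> (T \<union> A))"
    using rank_indep[OF m TN] rank_mono[OF m, of "T \<union> N" "(A \<union> N) \<union> (T \<union> A)"] by auto
  moreover have "card A \<le> mrank I ((A \<union> N) \<inter> (T \<union> A))"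
    using rank_indep[OF m A(1)] rank_mono[OF m, of "A" "(A \<union> N) \<inter> (T \<union> A)"] by auto
  moreover have fT: "finite T" "finite N" "finite A" using m_fin[OF m TN] m_fin[OF m A(1)] by auto
  moreover have "T \<inter> N = {}" "A \<inter> N = {}" using N A(2) indep_in_span[OF m T] by auto
  ultimately have "card (A \<union> N) \<le> mrank I (A \<union> N)" using s
    by (simp add: card_Un_disjoint)
  then show ?thesis using indep_rank[OF m] fT by auto
qed

lemma phase_a: assumes "matroid E I1" "matroid E I2"
  shows "S \<subseteq> T \<and> I1 T \<and> I2 T \<Longrightarrow> fold (phase_a_step I1 I2 Psi) xs (S, T) = (S', T')
     \<Longrightarrow> S' \<subseteq> T' \<and> I1 T' \<and> I2 T'"
proof (induction xs arbitrary: S T)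
  case Nil then show ?case by simp
next
  case (Cons x xs)
  obtain S1 T1 where st: "phase_a_step I1 I2 Psi x (S, T) = (S1, T1)" by fastforce
  have "S1 \<subseteq> T1 \<and> I1 T1 \<and> I2 T1" using Cons(2) st unfolding phase_a_step_def
    by (auto split: if_splits)
  then show ?case using Cons st by simp
qed

definition invb where
  "invb E I1 I2 S Tf N1 N2 \<longleftrightarrow>
     I1 (S \<union> N1) \<and> I2 (Tf \<union> N1) \<and> N1 \<subseteq> mspan E I1 Tf \<and> N1 \<inter> mspan E I2 Tf = {} \<and>
     I2 (S \<union> N2) \<and> I1 (Tf \<union> N2) \<and> N2 \<subseteq> mspan E I2 Tf \<and> N2 \<inter> mspan E I1 Tf = {}"

lemma addN: "I (S \<union> N) \<and> J (Tf \<union> N) \<and> N \<subseteq> mspan E I Tf \<and> N \<inter> mspan E J Tf = {} \<Longrightarrow>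
  N' = add_N E I J S Tf e N \<Longrightarrow>
  I (S \<union> N') \<and> J (Tf \<union> N') \<and> N' \<subseteq> mspan E I Tf \<and> N' \<inter> mspan E J Tf = {}"
proof (cases "e \<in> mspan E I Tf \<and> e \<notin> mspan E J Tf \<and> I (S \<union> N \<union> {e}) \<and> J (Tf \<union> N \<union> {e})")
  case True
  assume h: "I (S \<union> N) \<and> J (Tf \<union> N) \<and> N \<subseteq> mspan E I Tf \<and> N \<inter> mspan E J Tf = {}"
    "N' = add_N E I J S Tf e N"
  then have "N' = N \<union> {e}" using True unfolding add_N_def by simp
  then show ?thesis using True h(1) by (simp add: Un_assoc)
next
  case False
  assume h: "I (S \<union> N) \<and> J (Tf \<union> N) \<and> N \<subseteq> mspan E I Tf \<and> N \<inter> mspan E J Tf = {}"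
    "N' = add_N E I J S Tf e N"
  have "add_N E I J S Tf e N = N" unfolding add_N_def by (rule if_not_P[OF False])
  then have "N' = N" using h(2) by simp
  then show ?thesis using h(1) by simp
qed

lemma phase_b: "invb E I1 I2 S Tf N1 N2 \<Longrightarrow> fold (phase_b_step E I1 I2 S Tf) xs (N1, N2) = (N1', N2')
     \<Longrightarrow> invb E I1 I2 S Tf N1' N2'"
proof (induction xs arbitrary: N1 N2)
  case Nil then show ?case by simp
next
  case (Cons x xs)
  obtain A B where st: "phase_b_step E I1 I2 S Tf x (N1, N2) = (A, B)" by fastforce
  have AB: "A = add_N E I1 I2 S Tf x N1" "B = add_N E I2 I1 S Tf x N2"
    using st unfolding phase_b_step_def Let_def by auto
  have h1: "I1 (S \<union> N1) \<and> I2 (Tf \<union> N1) \<and> N1 \<subseteq> mspan E I1 Tf \<and> N1 \<inter> mspan E I2 Tf = {}"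
    and h2: "I2 (S \<union> N2) \<and> I1 (Tf \<union> N2) \<and> N2 \<subseteq> mspan E I2 Tf \<and> N2 \<inter> mspan E I1 Tf = {}"
    using Cons(2) unfolding invb_def by simp_all
  have "invb E I1 I2 S Tf A B" using addN[OF h1 AB(1)] addN[OF h2 AB(2)] unfolding invb_def by simp
  then show ?case using Cons st by simp
qed

theorem lemma6:
  fixes E :: "'a set" and I1 I2 :: "'a set \<Rightarrow> bool" and f p :: real
    and ord :: "'a list" and Psi :: "'a \<Rightarrow> bool"
  assumes "matroid E I1" and "matroid E I2"
    and "0 < f" and "f < 1" and "0 < p" and "p < 1"
    and "distinct ord" and "set ord = E"
  shows "case marking_greedy E I1 I2 f ord Psi of (S, N1, N2) \<Rightarrow>
           I1 (S \<union> N1 \<union> N2) \<and> I2 (S \<union> N1 \<union> N2)"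
proof -
  define k where "k = nat \<lfloor>f * real (length ord)\<rfloor>"
  obtain S Tf where a: "fold (phase_a_step I1 I2 Psi) (take k ord) ({}, {}) = (S, Tf)" by fastforce
  obtain N1 N2 where b: "fold (phase_b_step E I1 I2 S Tf) (drop k ord) ({}, {}) = (N1, N2)" by fastforce
  have mg: "marking_greedy E I1 I2 f ord Psi = (S, N1, N2)"
    unfolding marking_greedy_def k_def[symmetric] using a b by simp
  have e1: "I1 {}" "I2 {}" using assms(1,2) unfolding matroid_def by auto
  have A: "S \<subseteq> Tf \<and> I1 Tf \<and> I2 Tf" using phase_a[OF assms(1,2) _ a] e1 by simp
  have S1: "I1 S" "I2 S" using A m_sub[OF assms(1)] m_sub[OF assms(2)] by auto
  have "invb E I1 I2 S Tf {} {}" unfolding invb_def using A S1 by simp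
  then have B: "invb E I1 I2 S Tf N1 N2" using phase_b[OF _ b] by simp
  have sp1: "S \<subseteq> mspan E I1 Tf" "S \<subseteq> mspan E I2 Tf"
    using A indep_in_span[OF assms(1), of Tf] indep_in_span[OF assms(2), of Tf] by auto
  have "I1 ((S \<union> N1) \<union> N2)"
    by (rule key[OF assms(1), of "S \<union> N1" Tf N2]) (use B A sp1 in \<open>simp_all add: invb_def\<close>)
  moreover have "I2 ((S \<union> N2) \<union> N1)"
    by (rule key[OF assms(2), of "S \<union> N2" Tf N1]) (use B A sp1 in \<open>simp_all add: invb_def\<close>)
  ultimately show ?thesis using mg by (simp add: Un_ac)
qed

end
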